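(* Let $K:\mathbb{R}^2\to\mathbb{R}$ satisfy $K(x)\le K(y)$ whenever $|x|\ge|y|$, and let $u\in C^2(\mathbb{R}^2)$ solve $\Delta u+Ke^{2u}=0$ with $\sup_y\int_{B_R(y)}u^+\,dx<\infty$ for every $R>0$ and $\int_{\mathbb{R}^2}|K|e^{2u}\,dx<\infty$. Define $\bar u(r)=\frac1{2\pi}\int_0^{2\pi}u(r\cos\theta,r\sin\theta)\,d\theta$ for $r\ge0$. Then $$\int_{\mathbb{R}^2}|K(x)|e^{2\bar u(|x|)}\,dx<\infty.$$ If moreover $\int_{\mathbb{R}^2}|\ln|x||^2|K(x)|e^{2u(x)}\,dx<\infty$, then also $\int_{\mathbb{R}^2}(\ln|x|)^2|K(x)|e^{2\bar u(|x|)}\,dx<\infty$.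
   Context: $B_R(y)$ is the open disk of radius $R$ centered at $y$; $u^+=\max\{u,0\}$. The monotonicity hypothesis forces $K$ to be radially symmetric. *)

theory Defs
  imports "HOL-Analysis.Analysis"
begin

text \<open>Points of R^2 are pairs (x1,x2); the Euclidean norm of a pair is sqrt(x1^2+x2^2).\<close>

definition C2_with_laplacian :: "(real \<times> real \<Rightarrow> real) \<Rightarrow> (real \<times> real \<Rightarrow> real) \<Rightarrow> bool" where
  "C2_with_laplacian u L \<longleftrightarrow>
     (\<exists>u1 u2 u11 u12 u21 u22 :: real \<times> real \<Rightarrow> real.
        (\<forall>p. (u has_derivative (\<lambda>(h1,h2). u1 p * h1 + u2 p * h2)) (at p)) \<and>
        (\<forall>p. (u1 has_derivative (\<lambda>(h1,h2). u11 p * h1 + u12 p * h2)) (at p)) \<and>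
        (\<forall>p. (u2 has_derivative (\<lambda>(h1,h2). u21 p * h1 + u22 p * h2)) (at p)) \<and>
        continuous_on UNIV u11 \<and> continuous_on UNIV u12 \<and>
        continuous_on UNIV u21 \<and> continuous_on UNIV u22 \<and>
        (\<forall>p. L p = u11 p + u22 p))"

definition C2 :: "(real \<times> real \<Rightarrow> real) \<Rightarrow> bool" where
  "C2 u \<longleftrightarrow> (\<exists>L. C2_with_laplacian u L)"

definition laplacian :: "(real \<times> real \<Rightarrow> real) \<Rightarrow> real \<times> real \<Rightarrow> real" where
  "laplacian u = (SOME L. C2_with_laplacian u L)"

definition circ_avg :: "(real \<times> real \<Rightarrow> real) \<Rightarrow> real \<Rightarrow> real" where
  "circ_avg u r = (1 / (2 * pi)) * integral {0..2*pi} (\<lambda>\<theta>. u (r * cos \<theta>, r * sin \<theta>))"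

end

theory Submission
  imports Defs
begin


lemma meas_prod_borel: "h \<in> borel_measurable borel \<Longrightarrow> h \<in> borel_measurable (lborel \<Otimes>\<^sub>M lborel)"
  by (simp add: lborel_prod)

lemma cont_meas:
  fixes g :: "'a::topological_space \<Rightarrow> 'b::topological_space"
  shows "continuous_on UNIV g \<Longrightarrow> h \<in> borel_measurable borel \<Longrightarrow> (\<lambda>z. h (g z)) \<in> borel_measurable borel"
  using measurable_compose[OF borel_measurable_continuous_onI, of g h] by (simp add: o_def)

lemma shear_x:
  fixes h :: "real \<times> real \<Rightarrow> ennreal"
  assumes h: "h \<in> borel_measurable borel"
  shows "(\<integral>\<^sup>+ z. h (fst z + a * snd z, snd z) \<partial>lborel) = (\<integral>\<^sup>+ z. h z \<partial>lborel)"
proof -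
  have m2: "(\<lambda>z. h (fst z + a * snd z, snd z)) \<in> borel_measurable borel"
    by (rule cont_meas[OF _ h]) (intro continuous_intros)
  have "(\<integral>\<^sup>+ z. h z \<partial>lborel) = (\<integral>\<^sup>+ y. \<integral>\<^sup>+ x. h (x, y) \<partial>lborel \<partial>lborel)"
    using lborel_pair.nn_integral_snd[OF meas_prod_borel[OF h]] by (simp add: lborel_prod)
  also have "\<dots> = (\<integral>\<^sup>+ y. \<integral>\<^sup>+ x. h (x + a * y, y) \<partial>lborel \<partial>lborel)"
  proof (rule nn_integral_cong)
    fix y :: real
    have "(\<lambda>x. h (x, y)) \<in> borel_measurable borel" by (rule cont_meas[OF _ h]) (intro continuous_intros)
    from nn_integral_real_affine[OF this, of 1 "a*y"]
    show "(\<integral>\<^sup>+ x. h (x, y) \<partial>lborel) = (\<integral>\<^sup>+ x. h (x + a * y, y) \<partial>lborel)"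
      by (simp add: add.commute)
  qed
  also have "\<dots> = (\<integral>\<^sup>+ z. h (fst z + a * snd z, snd z) \<partial>lborel)"
    using lborel_pair.nn_integral_snd[OF meas_prod_borel[OF m2]] by (simp add: lborel_prod)
  finally show ?thesis by simp
qed

lemma shear_y:
  fixes h :: "real \<times> real \<Rightarrow> ennreal"
  assumes h: "h \<in> borel_measurable borel"
  shows "(\<integral>\<^sup>+ z. h (fst z, snd z + b * fst z) \<partial>lborel) = (\<integral>\<^sup>+ z. h z \<partial>lborel)"
proof -
  have m2: "(\<lambda>z. h (fst z, snd z + b * fst z)) \<in> borel_measurable borel"
    by (rule cont_meas[OF _ h]) (intro continuous_intros)
  have "(\<integral>\<^sup>+ z. h z \<partial>lborel) = (\<integral>\<^sup>+ x. \<integral>\<^sup>+ y. h (x, y) \<partial>lborel \<partial>lborel)"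
    using lborel.nn_integral_fst[OF meas_prod_borel[OF h]] by (simp add: lborel_prod)
  also have "\<dots> = (\<integral>\<^sup>+ x. \<integral>\<^sup>+ y. h (x, y + b * x) \<partial>lborel \<partial>lborel)"
  proof (rule nn_integral_cong)
    fix x :: real
    have "(\<lambda>y. h (x, y)) \<in> borel_measurable borel" by (rule cont_meas[OF _ h]) (intro continuous_intros)
    from nn_integral_real_affine[OF this, of 1 "b*x"]
    show "(\<integral>\<^sup>+ y. h (x, y) \<partial>lborel) = (\<integral>\<^sup>+ y. h (x, y + b * x) \<partial>lborel)"
      by (simp add: add.commute)
  qed
  also have "\<dots> = (\<integral>\<^sup>+ z. h (fst z, snd z + b * fst z) \<partial>lborel)"
    using lborel.nn_integral_fst[OF meas_prod_borel[OF m2]] by (simp add: lborel_prod)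
  finally show ?thesis by simp
qed

definition rot :: "real \<Rightarrow> real \<times> real \<Rightarrow> real \<times> real" where
  "rot t z = (cos t * fst z - sin t * snd z, sin t * fst z + cos t * snd z)"

lemma rot_compose: "rot s (rot t z) = rot (s + t) z"
  by (simp add: rot_def cos_add sin_add algebra_simps)

lemma rot_measurable[measurable]: "rot t \<in> borel_measurable borel"
  unfolding rot_def by (intro borel_measurable_continuous_onI continuous_intros)

lemma rot_invariant_aux:
  fixes h :: "real \<times> real \<Rightarrow> ennreal"
  assumes h: "h \<in> borel_measurable borel" and c: "cos t \<noteq> -1"
  shows "(\<integral>\<^sup>+ z. h (rot t z) \<partial>lborel) = (\<integral>\<^sup>+ z. h z \<partial>lborel)"
proof -
  define a where "a = - sin t / (1 + cos t)"
  define s where "s = sin t"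
  have c1: "1 + cos t \<noteq> 0" using c by linarith
  have as1: "1 + a * s = cos t"
  proof -
    have e: "sin t * sin t = (1 - cos t) * (1 + cos t)"
      using sin_cos_squared_add[of t] by (simp add: power2_eq_square algebra_simps)
    have "a * s = - (sin t * sin t) / (1 + cos t)" by (simp add: a_def s_def)
    also have "\<dots> = - (1 - cos t)" unfolding e using c1 by simp
    finally show ?thesis by simp
  qed
  have as2: "2 * a + a * a * s = - sin t"
  proof -
    have "2 * a + a * a * s = a * (1 + (1 + a * s))" by (simp add: algebra_simps)
    also have "\<dots> = a * (1 + cos t)" using as1 by simp
    also have "\<dots> = - sin t" using c1 by (simp add: a_def)
    finally show ?thesis .
  qed
  have rot_eq: "rot t z = (let p = (fst z + a * snd z, snd z); q = (fst p, snd p + s * fst p)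
                 in (fst q + a * snd q, snd q))" for z
  proof -
    have "fst z + a * snd z + a * (snd z + s * (fst z + a * snd z)) =
          (1 + a * s) * fst z + (2 * a + a * a * s) * snd z" by (simp add: algebra_simps)
    moreover have "snd z + s * (fst z + a * snd z) = s * fst z + (1 + a * s) * snd z"
      by (simp add: algebra_simps)
    ultimately show ?thesis using as1 as2 by (simp add: rot_def s_def Let_def)
  qed
  define h1 where "h1 = (\<lambda>q. h (fst q + a * snd q, snd q))"
  define h2 where "h2 = (\<lambda>p. h1 (fst p, snd p + s * fst p))"
  have m1: "h1 \<in> borel_measurable borel" unfolding h1_def by (rule cont_meas[OF _ h]) (intro continuous_intros)
  have m2: "h2 \<in> borel_measurable borel" unfolding h2_def by (rule cont_meas[OF _ m1]) (intro continuous_intros)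
  have "(\<integral>\<^sup>+ z. h (rot t z) \<partial>lborel) = (\<integral>\<^sup>+ z. h2 (fst z + a * snd z, snd z) \<partial>lborel)"
    by (simp add: rot_eq h1_def h2_def Let_def)
  also have "\<dots> = (\<integral>\<^sup>+ z. h2 z \<partial>lborel)" by (rule shear_x[OF m2])
  also have "\<dots> = (\<integral>\<^sup>+ z. h1 z \<partial>lborel)" unfolding h2_def by (rule shear_y[OF m1])
  also have "\<dots> = (\<integral>\<^sup>+ z. h z \<partial>lborel)" unfolding h1_def by (rule shear_x[OF h])
  finally show ?thesis .
qed

lemma rot_invariant:
  fixes h :: "real \<times> real \<Rightarrow> ennreal"
  assumes h: "h \<in> borel_measurable borel"
  shows "(\<integral>\<^sup>+ z. h (rot t z) \<partial>lborel) = (\<integral>\<^sup>+ z. h z \<partial>lborel)"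
proof (cases "cos t = -1")
  case False
  then show ?thesis using rot_invariant_aux[OF h] by blast
next
  case True
  have "sin t = 0" using True sin_cos_squared_add[of t] by simp
  have c2: "cos (t/2) \<noteq> -1"
  proof
    assume "cos (t/2) = -1"
    then have "sin (t/2) = 0" using sin_cos_squared_add[of "t/2"] by simp
    with \<open>cos (t/2) = -1\<close> have "cos t = 1" using cos_double[of "t/2"] by simp
    with True show False by simp
  qed
  have hm: "(\<lambda>z. h (rot (t/2) z)) \<in> borel_measurable borel" by (rule cont_meas[OF _ h]) (unfold rot_def, intro continuous_intros)
  have "(\<integral>\<^sup>+ z. h (rot t z) \<partial>lborel) = (\<integral>\<^sup>+ z. h (rot (t/2) (rot (t/2) z)) \<partial>lborel)"
    by (simp add: rot_compose)
  also have "\<dots> = (\<integral>\<^sup>+ z. h (rot (t/2) z) \<partial>lborel)"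
    by (rule rot_invariant_aux[OF hm c2])
  also have "\<dots> = (\<integral>\<^sup>+ z. h z \<partial>lborel)" by (rule rot_invariant_aux[OF h c2])
  finally show ?thesis .
qed



lemma periodic_shift:
  fixes g :: "real \<Rightarrow> real"
  assumes cg: "continuous_on UNIV g" and per: "\<And>t. g (t + 2*pi) = g t"
    and a: "0 \<le> a" "a \<le> 2*pi"
  shows "integral {0..2*pi} (\<lambda>t. g (a + t)) = integral {0..2*pi} g"
proof -
  have int: "g integrable_on {c..d}" for c d
    by (rule integrable_continuous_interval) (use cg continuous_on_subset in blast)
  have "integral {0..2*pi} (\<lambda>t. g (a + t)) = integral {0..2*pi} (g \<circ> (+) a)"
    by (simp add: o_def)
  also have "\<dots> = integral {a..2*pi + a} g"
    using integral_shift_Icc_real[of 0 "2*pi" g a] by simp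
  also have "\<dots> = integral {a..2*pi} g + integral {2*pi..2*pi+a} g"
    using Henstock_Kurzweil_Integration.integral_combine[where a=a and c="2*pi" and b="2*pi+a" and f=g] a int by simp
  also have "integral {2*pi..2*pi+a} g = integral {0..a} (g \<circ> (+) (2*pi))"
    using integral_shift_Icc_real[of 0 a g "2*pi"] by (simp add: add.commute)
  also have "g \<circ> (+) (2*pi) = g" using per by (auto simp: add.commute o_def)
  also have "integral {a..2*pi} g + integral {0..a} g = integral {0..2*pi} g"
    using Henstock_Kurzweil_Integration.integral_combine[where a=0 and c=a and b="2*pi" and f=g] a int by simp
  finally show ?thesis .
qed

lemma jensen_exp:
  fixes G :: "real \<Rightarrow> real"
  assumes cG: "continuous_on {0..2*pi} G"
  shows "exp (2 * (integral {0..2*pi} G / (2*pi))) \<le> integral {0..2*pi} (\<lambda>t. exp (2 * G t)) / (2*pi)"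
proof -
  define I where "I = integral {0..2*pi} G"
  define m where "m = I / (2*pi)"
  have hG: "(G has_integral I) {0..2*pi}" unfolding I_def
    using integrable_continuous_interval[OF cG] by (simp add: has_integral_integral)
  have cE: "continuous_on {0..2*pi} (\<lambda>t. exp (2 * G t))" by (intro continuous_intros cG)
  have hE: "((\<lambda>t. exp (2 * G t)) has_integral integral {0..2*pi} (\<lambda>t. exp (2 * G t))) {0..2*pi}"
    using integrable_continuous_interval[OF cE] by (simp add: has_integral_integral)
  have hL: "((\<lambda>t. exp (2*m) * (1 + 2 * G t - 2 * m)) has_integral
            exp (2*m) * ((2*pi) + 2 * I - 2 * m * (2*pi))) {0..2*pi}"
  proof -
    have "((\<lambda>t. 1 + 2 * G t - 2 * m) has_integral
            ((2*pi) + 2 * I - 2 * m * (2*pi))) {0..2*pi}"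
      by (intro has_integral_diff has_integral_add has_integral_mult_right hG)
         (use has_integral_const_real[of "1::real" 0 "2*pi"] has_integral_const_real[of "2*m" 0 "2*pi"] in \<open>auto simp: mult_ac real_scaleR_def\<close>)
    then show ?thesis by (rule has_integral_mult_right)
  qed
  have "exp (2*m) * ((2*pi) + 2 * I - 2 * m * (2*pi)) \<le> integral {0..2*pi} (\<lambda>t. exp (2 * G t))"
  proof (rule has_integral_le[OF hL hE])
    fix t
    have "1 + (2 * G t - 2 * m) \<le> exp (2 * G t - 2 * m)" by (rule exp_ge_add_one_self)
    then have "exp (2*m) * (1 + 2 * G t - 2 * m) \<le> exp (2*m) * exp (2 * G t - 2 * m)"
      by (intro mult_left_mono) (auto simp: algebra_simps)
    also have "\<dots> = exp (2 * G t)" by (simp add: exp_add[symmetric])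
    finally show "exp (2*m) * (1 + 2 * G t - 2 * m) \<le> exp (2 * G t)" .
  qed
  moreover have "(2*pi) + 2 * I - 2 * m * (2*pi) = 2*pi"
    by (simp add: m_def)
  ultimately have "exp (2*m) * (2*pi) \<le> integral {0..2*pi} (\<lambda>t. exp (2 * G t))" by simp
  then show ?thesis unfolding m_def I_def by (simp add: field_simps)
qed



lemma polar_obtain:
  fixes x :: "real \<times> real"
  obtains a where "0 \<le> a" "a \<le> 2*pi" "x = (norm x * cos a, norm x * sin a)"
proof (cases "x = 0")
  case True
  then show ?thesis using that[of 0] by (simp add: zero_prod_def)
next
  case False
  define r where "r = norm x"
  have r: "r > 0" using False by (simp add: r_def)
  have r2: "r^2 = (fst x)^2 + (snd x)^2" unfolding r_def
    by (cases x) (simp add: norm_Pair)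
  have "(fst x / r)^2 + (snd x / r)^2 = 1" using r by (simp add: power_divide add_divide_distrib[symmetric] flip: r2)
  then obtain a where a: "0 \<le> a" "a < 2*pi" "fst x / r = cos a" "snd x / r = sin a"
    by (rule sincos_total_2pi)
  have "x = (r * cos a, r * sin a)" using a(3,4) r by (cases x) (simp add: field_simps)
  then show ?thesis using that[of a] a r_def by simp
qed

lemma pointwise:
  fixes u :: "real \<times> real \<Rightarrow> real"
  assumes cu: "continuous_on UNIV u"
  shows "exp (2 * circ_avg u (norm x)) \<le> integral {0..2*pi} (\<lambda>t. exp (2 * u (rot t x))) / (2*pi)"
proof -
  obtain a where a: "0 \<le> a" "a \<le> 2*pi" "x = (norm x * cos a, norm x * sin a)"
    by (rule polar_obtain)
  define g where "g = (\<lambda>t. u (norm x * cos t, norm x * sin t))"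
  have cg: "continuous_on UNIV g" unfolding g_def
    by (rule continuous_on_compose2[OF cu]) (auto intro!: continuous_intros)
  have per: "g (t + 2*pi) = g t" for t by (simp add: g_def)
  have rx: "u (rot t x) = g (a + t)" for t
  proof -
    have "rot t x = (norm x * cos (a + t), norm x * sin (a + t))"
      by (subst a(3)) (simp add: rot_def cos_add sin_add algebra_simps)
    then show ?thesis by (simp add: g_def)
  qed
  have "circ_avg u (norm x) = integral {0..2*pi} g / (2*pi)"
    by (simp add: circ_avg_def g_def)
  also have "\<dots> = integral {0..2*pi} (\<lambda>t. g (a + t)) / (2*pi)"
    using periodic_shift[OF cg per a(1,2)] by simp
  finally have ca: "circ_avg u (norm x) = integral {0..2*pi} (\<lambda>t. g (a + t)) / (2*pi)" .
  have cG: "continuous_on {0..2*pi} (\<lambda>t. g (a + t))"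
    by (rule continuous_on_compose2[OF cg]) (auto intro!: continuous_intros)
  show ?thesis unfolding ca rx using jensen_exp[OF cG] .
qed



lemma main_ineq:
  fixes u f :: "real \<times> real \<Rightarrow> real"
  assumes cu: "continuous_on UNIV u" and fm: "f \<in> borel_measurable borel"
    and f0: "\<And>x. f x \<ge> 0" and frad: "\<And>t x. f (rot t x) = f x"
  shows "(\<integral>\<^sup>+x. ennreal (f x * exp (2 * circ_avg u (norm x))) \<partial>lborel)
           \<le> (\<integral>\<^sup>+x. ennreal (f x * exp (2 * u x)) \<partial>lborel)"
proof -
  define E where "E = (\<lambda>t x. exp (2 * u (rot t x)))"
  define A where "A = (\<lambda>x. integral {0..2*pi} (\<lambda>t. E t x))"
  define J where "J = (\<integral>\<^sup>+x. ennreal (f x * exp (2 * u x)) \<partial>lborel)"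
  define F where "F = (\<lambda>x t. ennreal (f x * (indicator {0..2*pi} t * E t x)))"
  have cE: "continuous_on UNIV (\<lambda>t. E t x)" for x
    unfolding E_def rot_def
    by (intro continuous_intros continuous_on_compose2[OF cu]) (auto intro!: continuous_intros)
  have mE: "(\<lambda>t. E t x) \<in> borel_measurable borel" for x
    by (rule borel_measurable_continuous_onI[OF cE])
  have cE2: "continuous_on UNIV (\<lambda>p::(real\<times>real)\<times>real. E (snd p) (fst p))"
    unfolding E_def rot_def
    by (intro continuous_intros continuous_on_compose2[OF cu]) (auto intro!: continuous_intros)
  have m1: "(\<lambda>p::(real\<times>real)\<times>real. f (fst p)) \<in> borel_measurable borel"
    by (rule cont_meas[OF _ fm]) (intro continuous_intros)
  have m2: "(\<lambda>p::(real\<times>real)\<times>real. indicator {0..2*pi} (snd p) :: real) \<in> borel_measurable borel"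
    by (rule cont_meas) (auto intro!: continuous_intros)
  have m3: "(\<lambda>p::(real\<times>real)\<times>real. E (snd p) (fst p)) \<in> borel_measurable borel"
    by (rule borel_measurable_continuous_onI[OF cE2])
  have mF: "(\<lambda>(x, t). F x t) \<in> borel_measurable borel"
  proof -
    have "(\<lambda>p::(real\<times>real)\<times>real. ennreal (f (fst p) * (indicator {0..2*pi} (snd p) * E (snd p) (fst p))))
           \<in> borel_measurable borel"
      by (intro measurable_compose[OF _ measurable_ennreal] borel_measurable_times m1 m2 m3)
    then show ?thesis by (simp add: F_def case_prod_beta')
  qed
  have mF2: "(\<lambda>(x, t). F x t) \<in> borel_measurable (lborel \<Otimes>\<^sub>M lborel)"
    using mF by (simp add: lborel_prod)
  have mh: "(\<lambda>z. ennreal (f z * exp (2 * u z))) \<in> borel_measurable borel"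
    by (intro measurable_compose[OF _ measurable_ennreal] borel_measurable_times fm
        borel_measurable_continuous_onI continuous_intros continuous_on_compose2[OF cu]) auto
  have step1: "(\<integral>\<^sup>+x. ennreal (f x * exp (2 * circ_avg u (norm x))) \<partial>lborel)
           \<le> (\<integral>\<^sup>+x. ennreal (f x * (A x / (2*pi))) \<partial>lborel)"
    by (intro nn_integral_mono ennreal_leI mult_left_mono f0)
       (use pointwise[OF cu] in \<open>simp add: A_def E_def\<close>)
  have eqA: "ennreal (f x * (A x / (2*pi))) = ennreal (1/(2*pi)) * (\<integral>\<^sup>+t. F x t \<partial>lborel)" for x
  proof -
    have hi: "((\<lambda>t. E t x) has_integral A x) {0..2*pi}"
      unfolding A_def using integrable_continuous_interval[OF continuous_on_subset[OF cE]]
      by (simp add: has_integral_integral)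
    have "(\<integral>\<^sup>+t. ennreal (indicator {0..2*pi} t * E t x) \<partial>lborel) = ennreal (A x)"
      by (rule nn_integral_has_integral_lebesgue[OF _ hi]) (simp add: E_def)
    moreover have "(\<integral>\<^sup>+t. F x t \<partial>lborel) = ennreal (f x) * (\<integral>\<^sup>+t. ennreal (indicator {0..2*pi} t * E t x) \<partial>lborel)"
    proof -
      have "(\<integral>\<^sup>+t. F x t \<partial>lborel) = (\<integral>\<^sup>+t. ennreal (f x) * ennreal (indicator {0..2*pi} t * E t x) \<partial>lborel)"
        unfolding F_def by (intro nn_integral_cong) (simp add: ennreal_mult f0 E_def)
      also have "\<dots> = ennreal (f x) * (\<integral>\<^sup>+t. ennreal (indicator {0..2*pi} t * E t x) \<partial>lborel)"
        by (rule nn_integral_cmult) (intro measurable_compose[OF _ measurable_ennreal] borel_measurable_times borel_measurable_indicator, auto simp: mE)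
      finally show ?thesis .
    qed
    moreover have "A x \<ge> 0"
      unfolding A_def by (rule integral_nonneg) (rule integrable_continuous_interval, rule continuous_on_subset[OF cE], simp, simp add: E_def)
    ultimately have eqs: "(\<integral>\<^sup>+t. F x t \<partial>lborel) = ennreal (f x) * ennreal (A x)" and A0: "A x \<ge> 0" by simp_all
    have "ennreal (f x * (A x / (2*pi))) = ennreal ((1/(2*pi)) * (f x * A x))"
      by (rule arg_cong[where f=ennreal]) simp
    also have "\<dots> = ennreal (1/(2*pi)) * (ennreal (f x) * ennreal (A x))"
      using f0[of x] A0 by (subst ennreal_mult[symmetric], simp, simp)+ simp
    finally show ?thesis unfolding eqs .
  qed
  have inner: "(\<integral>\<^sup>+x. F x t \<partial>lborel) = J * indicator {0..2*pi} t" for t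
  proof (cases "t \<in> {0..2*pi}")
    case True
    have "(\<integral>\<^sup>+x. F x t \<partial>lborel) = (\<integral>\<^sup>+x. ennreal (f (rot t x) * exp (2 * u (rot t x))) \<partial>lborel)"
      unfolding F_def E_def using True by (simp add: frad)
    also have "\<dots> = J" unfolding J_def by (rule rot_invariant[OF mh])
    finally show ?thesis using True by simp
  next
    case False
    then show ?thesis by (simp add: F_def)
  qed
  have "(\<integral>\<^sup>+x. ennreal (f x * (A x / (2*pi))) \<partial>lborel)
        = (\<integral>\<^sup>+x. ennreal (1/(2*pi)) * (\<integral>\<^sup>+t. F x t \<partial>lborel) \<partial>lborel)"
    by (rule nn_integral_cong) (rule eqA)
  also have "\<dots> = ennreal (1/(2*pi)) * (\<integral>\<^sup>+x. \<integral>\<^sup>+t. F x t \<partial>lborel \<partial>lborel)"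
    proof (rule nn_integral_cmult)
    have "(\<lambda>x. \<integral>\<^sup>+t. (\<lambda>(x,t). F x t) (x,t) \<partial>lborel) \<in> borel_measurable lborel"
      by (rule lborel.borel_measurable_nn_integral_fst[OF mF2])
    then show "(\<lambda>x. \<integral>\<^sup>+t. F x t \<partial>lborel) \<in> borel_measurable lborel" by simp
  qed
  also have "(\<integral>\<^sup>+x. \<integral>\<^sup>+t. F x t \<partial>lborel \<partial>lborel) = (\<integral>\<^sup>+t. \<integral>\<^sup>+x. F x t \<partial>lborel \<partial>lborel)"
    using pair_sigma_finite.Fubini'[OF _ mF2] by (simp add: pair_sigma_finite_def lborel.sigma_finite_measure_axioms)
  also have "\<dots> = (\<integral>\<^sup>+t. J * indicator {0..2*pi} t \<partial>lborel)" by (simp add: inner)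
  also have "\<dots> = J * ennreal (2*pi)" by (simp add: nn_integral_cmult_indicator)
  finally have "(\<integral>\<^sup>+x. ennreal (f x * (A x / (2*pi))) \<partial>lborel) = ennreal (1/(2*pi)) * ennreal (2*pi) * J"
    by (simp add: mult_ac)
  also have "ennreal (1/(2*pi)) * ennreal (2*pi) = 1"
    by (simp add: ennreal_mult[symmetric])
  finally show ?thesis using step1 unfolding J_def by simp
qed


lemma rot_alg: "((c::real) * a - s * b)^2 + (s * a + c * b)^2 = (s^2 + c^2) * (a^2 + b^2)"
  by (simp add: power2_eq_square algebra_simps)

lemma norm_rot[simp]: "norm (rot t x) = norm x"
proof -
  have "(cos t * fst x - sin t * snd x)^2 + (sin t * fst x + cos t * snd x)^2
        = (fst x)^2 + (snd x)^2"
  proof -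
    have "(cos t * fst x - sin t * snd x)^2 + (sin t * fst x + cos t * snd x)^2
        = ((sin t)^2 + (cos t)^2) * ((fst x)^2 + (snd x)^2)"
      by (rule rot_alg)
    then show ?thesis by simp
  qed
  then show ?thesis by (cases x) (simp add: rot_def norm_Pair)
qed

lemma C2_continuous:
  assumes "C2 u" shows "continuous_on UNIV u"
proof -
  obtain L where "C2_with_laplacian u L" using assms unfolding C2_def by blast
  then obtain u1 u2 where d: "\<And>p. (u has_derivative (\<lambda>(h1,h2). u1 p * h1 + u2 p * h2)) (at p)"
    unfolding C2_with_laplacian_def by blast
  show ?thesis
    by (intro continuous_at_imp_continuous_on ballI has_derivative_continuous[OF d])
qed

theorem lemma5p3:
  fixes K u :: "real \<times> real \<Rightarrow> real"
  assumes K_mono: "\<And>x y. norm x \<ge> norm y \<Longrightarrow> K x \<le> K y"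
    and u_C2: "C2 u"
    and eq: "\<And>x. laplacian u x + K x * exp (2 * u x) = 0"
    and u_plus: "\<And>R. R > 0 \<Longrightarrow>
        (SUP y. \<integral>\<^sup>+ x \<in> ball y R. ennreal (max (u x) 0) \<partial>lborel) < \<infinity>"
    and fin: "(\<integral>\<^sup>+ x. ennreal (\<bar>K x\<bar> * exp (2 * u x)) \<partial>lborel) < \<infinity>"
  shows "(\<integral>\<^sup>+ x. ennreal (\<bar>K x\<bar> * exp (2 * circ_avg u (norm x))) \<partial>lborel) < \<infinity> \<and>
         ((\<integral>\<^sup>+ x. ennreal ((ln (norm x))\<^sup>2 * \<bar>K x\<bar> * exp (2 * u x)) \<partial>lborel) < \<infinity> \<longrightarrow>
         (\<integral>\<^sup>+ x. ennreal ((ln (norm x))\<^sup>2 * \<bar>K x\<bar> * exp (2 * circ_avg u (norm x))) \<partial>lborel) < \<infinity>)"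
proof -
  have cu: "continuous_on UNIV u" by (rule C2_continuous[OF u_C2])
  have Krad: "K x = K y" if "norm x = norm y" for x y
    using K_mono[of x y] K_mono[of y x] that by simp
  define k where "k = (\<lambda>r::real. K (max r 0, 0))"
  have Kk: "K x = k (norm x)" for x
    unfolding k_def by (rule Krad) (simp add: norm_Pair)
  have "mono (\<lambda>r. - k r)"
  proof (rule monoI)
    fix r s :: real assume "r \<le> s"
    then have "norm (max s 0, 0::real) \<ge> norm (max r 0, 0::real)" by (simp add: norm_Pair)
    then show "- k r \<le> - k s" unfolding k_def using K_mono by simp
  qed
  then have "(\<lambda>r. - k r) \<in> borel_measurable borel" by (rule borel_measurable_mono)
  then have "(\<lambda>r. - (- k r)) \<in> borel_measurable borel" by measurable
  then have km: "k \<in> borel_measurable borel" by simp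
  have Km: "K \<in> borel_measurable borel"
  proof -
    have "(\<lambda>x. k (norm x)) \<in> borel_measurable (borel :: (real \<times> real) measure)"
      by (rule cont_meas[OF _ km]) (intro continuous_intros)
    then show ?thesis by (simp add: Kk[symmetric])
  qed
  have Krot: "K (rot t x) = K x" for t x by (rule Krad) simp
  have m1: "(\<lambda>x. \<bar>K x\<bar>) \<in> borel_measurable borel" using Km by measurable
  have m2: "(\<lambda>x. (ln (norm x))\<^sup>2 * \<bar>K x\<bar>) \<in> borel_measurable borel" using Km by measurable
  have A: "(\<integral>\<^sup>+ x. ennreal (\<bar>K x\<bar> * exp (2 * circ_avg u (norm x))) \<partial>lborel)
           \<le> (\<integral>\<^sup>+ x. ennreal (\<bar>K x\<bar> * exp (2 * u x)) \<partial>lborel)"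
    by (rule main_ineq[OF cu m1]) (simp_all add: Krot)
  have B: "(\<integral>\<^sup>+ x. ennreal ((ln (norm x))\<^sup>2 * \<bar>K x\<bar> * exp (2 * circ_avg u (norm x))) \<partial>lborel)
           \<le> (\<integral>\<^sup>+ x. ennreal ((ln (norm x))\<^sup>2 * \<bar>K x\<bar> * exp (2 * u x)) \<partial>lborel)"
    by (rule main_ineq[OF cu m2]) (simp_all add: Krot)
  show ?thesis using A B fin by (auto dest: le_less_trans)
qed

end
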